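(* Let $\theta>0$, $\lambda>0$, $\mu>0$, $e\ge 0$. Let $$\pi(\alpha,d)=(\theta+\mu)\alpha-\frac{\alpha^2}{2}-\frac{\alpha}{\alpha+d}\lambda\alpha\theta-d,$$ and let $d^*(\alpha)$ be the firm's privately optimal security investment, $d^*(\alpha)=0$ if $\lambda\theta\le1$ and $d^*(\alpha)=\alpha(\sqrt{\lambda\theta}-1)$ if $\lambda\theta>1$. Define $$W_{SB}(\alpha)=\pi(\alpha,d^*(\alpha))-e\,\frac{\alpha}{\alpha+d^*(\alpha)}\,\lambda\alpha\theta .$$ Then the maximizer of $W_{SB}$ over $\alpha\ge 0$ (second-best deployment) is $$\alpha^{**}_{SB}(\theta)=\max\!\left\{0,\;\begin{cases}\mu+\theta\big(1-(1+e)\lambda\big), & \lambda\theta\le 1,\\ \theta+\mu+1-(2+e)\sqrt{\lambda\theta}, & \lambda\theta>1.\end{cases}\right\}$$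
   Context: A regulator chooses deployment $\alpha$ while the firm privately chooses security investment $d$ to maximize $\pi(\alpha,\cdot)$. $\theta$ is capability, $\lambda$ breach-loss magnitude, $\mu$ organizational readiness, $e$ the breach externality parameter (social breach damage is $(1+e)$ times private expected loss $\frac{\alpha}{\alpha+d}\lambda\alpha\theta$). *)

theory Defs
  imports Complex_Main
begin

definition profit :: "real \<Rightarrow> real \<Rightarrow> real \<Rightarrow> real \<Rightarrow> real \<Rightarrow> real" where
  "profit \<theta> lam \<mu> \<alpha> d =
     (\<theta> + \<mu>) * \<alpha> - \<alpha>^2 / 2 - (\<alpha> / (\<alpha> + d)) * lam * \<alpha> * \<theta> - d"

definition dstar :: "real \<Rightarrow> real \<Rightarrow> real \<Rightarrow> real" where
  "dstar \<theta> lam \<alpha> = (if lam * \<theta> \<le> 1 then 0 else \<alpha> * (sqrt (lam * \<theta>) - 1))"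

definition W_SB :: "real \<Rightarrow> real \<Rightarrow> real \<Rightarrow> real \<Rightarrow> real \<Rightarrow> real" where
  "W_SB \<theta> lam \<mu> e \<alpha> =
     profit \<theta> lam \<mu> \<alpha> (dstar \<theta> lam \<alpha>)
     - e * (\<alpha> / (\<alpha> + dstar \<theta> lam \<alpha>)) * lam * \<alpha> * \<theta>"

definition alpha_SB :: "real \<Rightarrow> real \<Rightarrow> real \<Rightarrow> real \<Rightarrow> real" where
  "alpha_SB \<theta> lam \<mu> e = max 0
     (if lam * \<theta> \<le> 1 then \<mu> + \<theta> * (1 - (1 + e) * lam)
      else \<theta> + \<mu> + 1 - (2 + e) * sqrt (lam * \<theta>))"

end

theory Submission
  imports Defs
begin

lemma quad_max:
  fixes c \<alpha> :: real
  assumes "\<alpha> \<ge> 0" "\<alpha> \<noteq> max 0 c"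
  shows "c * \<alpha> - \<alpha>^2/2 < c * max 0 c - (max 0 c)^2/2"
proof (cases "c \<ge> 0")
  case True
  then have "max 0 c = c" by simp
  moreover have "(\<alpha> - c)^2 > 0" using assms True by auto
  ultimately show ?thesis by (simp add: power2_eq_square algebra_simps)
next
  case False
  then have "\<alpha> > 0" using assms by auto
  then show ?thesis using False by (simp add: power2_eq_square)
qed

lemma W_form:
  fixes \<theta> lam \<mu> e \<alpha> :: real
  assumes "\<theta> > 0" "lam > 0" "\<alpha> \<ge> 0"
  shows "W_SB \<theta> lam \<mu> e \<alpha> = (if lam * \<theta> \<le> 1 then \<mu> + \<theta> * (1 - (1 + e) * lam)
      else \<theta> + \<mu> + 1 - (2 + e) * sqrt (lam * \<theta>)) * \<alpha> - \<alpha>^2/2"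
proof (cases "\<alpha> = 0")
  case True then show ?thesis by (simp add: W_SB_def profit_def dstar_def)
next
  case False
  then have ap: "\<alpha> > 0" using assms by auto
  show ?thesis
  proof (cases "lam * \<theta> \<le> 1")
    case True
    then show ?thesis using ap by (simp add: W_SB_def profit_def dstar_def field_simps)
  next
    case False
    define s where "s = sqrt (lam * \<theta>)"
    have s1: "s > 1" using False s_def by (simp add: real_less_rsqrt)
    have ss: "s * s = lam * \<theta>" using s_def False by simp
    have q: "\<alpha> + \<alpha> * (s - 1) = \<alpha> * s" by (simp add: algebra_simps)
    have "W_SB \<theta> lam \<mu> e \<alpha> = (\<theta> + \<mu>) * \<alpha> - \<alpha>^2 / 2 - (\<alpha> / (\<alpha> * s)) * (s*s) * \<alpha>
          - \<alpha> * (s - 1) - e * (\<alpha> / (\<alpha> * s)) * (s*s) * \<alpha>"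
      using False unfolding W_SB_def profit_def dstar_def s_def[symmetric] q ss
      by (simp add: algebra_simps)
    also have "\<dots> = (\<theta> + \<mu> + 1 - (2 + e) * s) * \<alpha> - \<alpha>^2/2"
      using ap s1 by (simp add: field_simps power2_eq_square)
    finally show ?thesis using False s_def by simp
  qed
qed

theorem proposition7:
  fixes \<theta> lam \<mu> e :: real
  assumes "\<theta> > 0" and "lam > 0" and "\<mu> > 0" and "e \<ge> 0"
  shows "alpha_SB \<theta> lam \<mu> e \<ge> 0 \<and>
         (\<forall>\<alpha>\<ge>0. \<alpha> \<noteq> alpha_SB \<theta> lam \<mu> e \<longrightarrow>
              W_SB \<theta> lam \<mu> e \<alpha> < W_SB \<theta> lam \<mu> e (alpha_SB \<theta> lam \<mu> e))"
proof -
  define c where "c = (if lam * \<theta> \<le> 1 then \<mu> + \<theta> * (1 - (1 + e) * lam)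
      else \<theta> + \<mu> + 1 - (2 + e) * sqrt (lam * \<theta>))"
  have a: "alpha_SB \<theta> lam \<mu> e = max 0 c" unfolding alpha_SB_def c_def by simp
  have W: "\<And>x. x \<ge> 0 \<Longrightarrow> W_SB \<theta> lam \<mu> e x = c * x - x^2/2"
    using W_form[OF assms(1,2)] c_def by simp
  show ?thesis unfolding a
  proof (intro conjI allI impI)
    fix x :: real assume "x \<ge> 0" "x \<noteq> max 0 c"
    then show "W_SB \<theta> lam \<mu> e x < W_SB \<theta> lam \<mu> e (max 0 c)"
      using W quad_max by simp
  qed simp
qed

end
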